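(* Let $r \in \mathbb{Q}_{>0}$ be such that $S_r$ is atomic. Then there exists $x \in S_r$ with $\rho(x) = \rho(S_r)$ (i.e., the elasticity of $S_r$ is accepted) if and only if $r \in \mathbb{N}$ or $r < 1$.
   Context: For $q \in \mathbb{Q}_{>0}$, $\mathsf{n}(q),\mathsf{d}(q)$ are the positive coprime integers with $q = \mathsf{n}(q)/\mathsf{d}(q)$. $S_r$ is the additive submonoid of $(\mathbb{Q}_{\ge 0},+)$ generated by $\{r^n : n \in \mathbb{N}_0\}$; it is atomic exactly when $r=1$ or $\mathsf{n}(r)>1$. $\mathsf{L}(x)$ denotes the set of lengths of factorizations of $x$ into atoms. The elasticity of $x \ne 0$ is $\rho(x) = \sup \mathsf{L}(x)/\inf \mathsf{L}(x) \in \mathbb{Q}_{\ge 1} \cup \{\infty\}$, $\rho(0)=1$, and $\rho(S_r) = \sup\{\rho(x) : x \in S_r \setminus \{0\}\}$. *)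

theory Defs
  imports Complex_Main "HOL-Library.Multiset" "HOL-Library.Extended_Real"
begin

inductive_set Sr :: "rat \<Rightarrow> rat set" for r :: rat where
  zero: "0 \<in> Sr r"
| step: "x \<in> Sr r \<Longrightarrow> x + r ^ n \<in> Sr r"

definition atoms :: "rat \<Rightarrow> rat set" where
  "atoms r = {a \<in> Sr r. a \<noteq> 0 \<and> (\<forall>b\<in>Sr r. \<forall>c\<in>Sr r. a = b + c \<longrightarrow> b = 0 \<or> c = 0)}"

definition factorizations :: "rat \<Rightarrow> rat \<Rightarrow> rat multiset set" where
  "factorizations r x = {F. set_mset F \<subseteq> atoms r \<and> sum_mset F = x}"

definition lengths :: "rat \<Rightarrow> rat \<Rightarrow> nat set" where
  "lengths r x = size ` factorizations r x"

definition atomic :: "rat \<Rightarrow> bool" where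
  "atomic r \<longleftrightarrow> (\<forall>x\<in>Sr r. x \<noteq> 0 \<longrightarrow> factorizations r x \<noteq> {})"

definition elasticity :: "rat \<Rightarrow> rat \<Rightarrow> ereal" where
  "elasticity r x = (if x = 0 then 1 else
     (SUP l\<in>lengths r x. ereal (real l)) / ereal (real (Inf (lengths r x))))"

definition monoid_elasticity :: "rat \<Rightarrow> ereal" where
  "monoid_elasticity r = (SUP x\<in>Sr r - {0}. elasticity r x)"

end

theory Submission
  imports Defs
begin

definition rep :: "rat \<Rightarrow> nat multiset \<Rightarrow> rat" where
  "rep r M = sum_mset (image_mset (\<lambda>j. r ^ j) M)"

lemma rep_simps[simp]: "rep r {#} = 0" "rep r (add_mset j M) = r ^ j + rep r M"
  "rep r (M + N) = rep r M + rep r N"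
  by (simp_all add: rep_def)

lemma rep_in_Sr: "rep r M \<in> Sr r"
proof (induction M)
  case empty then show ?case by (simp add: Sr.zero)
next
  case (add j M) then show ?case using Sr.step[OF add.IH, of j] by (simp add: add.commute)
qed

lemma Sr_rep: "x \<in> Sr r \<Longrightarrow> \<exists>M. x = rep r M"
proof (induction rule: Sr.induct)
  case zero then show ?case by (auto intro: exI[of _ "{#}"])
next
  case (step x n)
  then obtain M where "x = rep r M" by blast
  then show ?case by (intro exI[of _ "add_mset n M"]) simp
qed

lemma rep_nonneg: "r > 0 \<Longrightarrow> rep r M \<ge> 0"
  by (induction M) auto

lemma rep_pos: "r > 0 \<Longrightarrow> M \<noteq> {#} \<Longrightarrow> rep r M > 0"
proof (induction M)
  case empty then show ?case by simp
next
  case (add j M) then show ?case using rep_nonneg[of r M] by (simp add: add_pos_nonneg)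
qed

lemma rep_replicate: "rep r (replicate_mset k j) = of_nat k * r ^ j"
  by (induction k) (auto simp: algebra_simps)

lemma of_nat_in_Sr: "of_nat k \<in> Sr r"
proof (induction k)
  case 0 then show ?case by (simp add: Sr.zero)
next
  case (Suc k) then show ?case using Sr.step[OF Suc, of 0] by (simp add: add.commute)
qed

lemma atom_pow: assumes "a \<in> atoms r" "r > 0" shows "\<exists>j. a = r ^ j"
proof -
  from assms have a: "a \<in> Sr r" "a \<noteq> 0" and irr: "\<forall>b\<in>Sr r. \<forall>c\<in>Sr r. a = b + c \<longrightarrow> b = 0 \<or> c = 0"
    by (auto simp: atoms_def)
  from a(1) obtain M where M: "a = rep r M" using Sr_rep by blast
  with a(2) have "M \<noteq> {#}" by auto
  then obtain j M' where "M = add_mset j M'" by (metis multiset_cases)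
  hence "a = rep r M' + rep r {#j#}" using M by simp
  with irr rep_in_Sr[of r M'] rep_in_Sr[of r "{#j#}"] have "rep r M' = 0 \<or> r^j = 0" by auto
  with assms(2) \<open>a = rep r M' + rep r {#j#}\<close> show ?thesis by auto
qed

lemma size_le_sum: "(\<forall>a\<in>#F. (1::rat) \<le> a) \<Longrightarrow> of_nat (size F) \<le> sum_mset F"
  by (induction F) auto

lemma size_eq_sum: "(\<forall>a\<in>#F. a = (1::rat)) \<Longrightarrow> sum_mset F = of_nat (size F)"
  by (induction F) auto

lemma rep_scale:
  fixes n d :: int
  assumes "d \<noteq> 0" "\<forall>j\<in>#M. j \<le> N"
  shows "of_int d ^ N * rep (of_int n / of_int d) M = of_int (sum_mset (image_mset (\<lambda>j. n^j * d^(N-j)) M))"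
using assms(2) proof (induction M)
  case empty then show ?case by simp
next
  case (add j M)
  have "of_int d ^ N * (of_int n / of_int d) ^ j = (of_int (n^j * d^(N-j)) :: rat)"
  proof -
    have "N = j + (N - j)" using add.prems by simp
    hence "(of_int d::rat) ^ N = of_int d ^ j * of_int d ^ (N-j)" by (metis power_add)
    thus ?thesis using assms(1) by (simp add: power_divide)
  qed
  then show ?case using add by (simp add: distrib_left)
qed

lemma dvd_sum_mset_image: "(\<And>x. x \<in># M \<Longrightarrow> (a::int) dvd f x) \<Longrightarrow> a dvd sum_mset (image_mset f M)"
  by (induction M) auto

lemma split2:
  assumes "r > 0" "r ^ k = b + c" "b \<in> Sr r" "c \<in> Sr r" "b \<noteq> 0" "c \<noteq> 0"
  obtains M where "rep r M = r ^ k" "size M \<ge> 2"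
proof -
  obtain M1 M2 where "b = rep r M1" "c = rep r M2" using assms Sr_rep by metis
  moreover have "M1 \<noteq> {#}" "M2 \<noteq> {#}" using assms calculation by auto
  ultimately have "rep r (M1 + M2) = r ^ k" "size (M1 + M2) \<ge> 2" using assms(2)
    by (auto simp: Suc_le_eq nonempty_has_size)
  thus ?thesis using that by blast
qed

lemma big_elem_contra:
  assumes "r > 0" "rep r M = r ^ k" "size M \<ge> 2" "j \<in># M" "r ^ j \<ge> r ^ k"
  shows False
proof -
  obtain M' where M: "M = add_mset j M'" using assms(4) by (metis multi_member_split)
  hence "M' \<noteq> {#}" using assms(3) by auto
  hence "rep r M' > 0" using rep_pos assms(1) by blast
  thus False using assms M by simp
qed

lemma pow_atom_gt1:
  fixes n d :: int
  assumes r: "r = of_int n / of_int d" and d: "d > 1" and cop: "coprime n d" and r1: "r \<ge> 1"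
  shows "r ^ k \<in> atoms r"
proof -
  have r0: "r > 0" using r1 by simp
  have "rep r {#k#} \<in> Sr r" by (rule rep_in_Sr)
  hence mem: "r ^ k \<in> Sr r" by simp
  have irr: False if hh: "r ^ k = b + c" "b \<in> Sr r" "c \<in> Sr r" "b \<noteq> 0" "c \<noteq> 0" for b c
  proof -
    obtain M where M: "rep r M = r ^ k" "size M \<ge> 2" using split2[OF r0 hh] by blast
    have lt: "\<forall>j\<in>#M. j < k"
    proof (rule ccontr)
      assume "\<not> (\<forall>j\<in>#M. j < k)"
      then obtain j where "j \<in># M" "j \<ge> k" by auto
      moreover have "r ^ j \<ge> r ^ k" using r1 \<open>j \<ge> k\<close> by (simp add: power_increasing)
      ultimately show False using big_elem_contra[OF r0 M] by blast
    qed
    hence le: "\<forall>j\<in>#M. j \<le> k" by auto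
    have A: "of_int d ^ k * rep r M = (of_int (sum_mset (image_mset (\<lambda>j. n^j * d^(k-j)) M)) :: rat)"
      using rep_scale[OF _ le, of d n] d r by simp
    have B: "of_int d ^ k * rep r M = (of_int (n ^ k) :: rat)"
      using rep_scale[of d "{#k#}" k n] d r M(1) by simp
    have eq: "n ^ k = sum_mset (image_mset (\<lambda>j. n^j * d^(k-j)) M)"
      using A B of_int_eq_iff by fastforce
    have "d dvd sum_mset (image_mset (\<lambda>j. n^j * d^(k-j)) M)"
    proof (rule dvd_sum_mset_image)
      fix j assume "j \<in># M"
      hence "k - j = Suc (k - j - 1)" using lt by auto
      thus "d dvd n^j * d^(k-j)" by (metis dvd_mult dvd_mult2 dvd_refl power_Suc)
    qed
    hence "d dvd n ^ k" using eq by simp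
    moreover have "coprime (n ^ k) d" using cop by simp
    ultimately have "is_unit d" by (meson coprime_common_divisor dvd_refl)
    thus False using d by simp
  qed
  show ?thesis unfolding atoms_def using mem r0 irr by auto
qed

lemma pow_atom_lt1:
  fixes n d :: int
  assumes r: "r = of_int n / of_int d" and d: "d > 0" and n: "n > 1" and cop: "coprime n d"
    and r1: "r \<le> 1" and rpos: "r > 0"
  shows "r ^ k \<in> atoms r"
proof -
  have r0: "r > 0" by (rule rpos)
  have "rep r {#k#} \<in> Sr r" by (rule rep_in_Sr)
  hence mem: "r ^ k \<in> Sr r" by simp
  have irr: False if hh: "r ^ k = b + c" "b \<in> Sr r" "c \<in> Sr r" "b \<noteq> 0" "c \<noteq> 0" for b c
  proof -
    obtain M where M: "rep r M = r ^ k" "size M \<ge> 2" using split2[OF r0 hh] by blast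
    have gt: "\<forall>j\<in>#M. j > k"
    proof (rule ccontr)
      assume "\<not> (\<forall>j\<in>#M. j > k)"
      then obtain j where "j \<in># M" "j \<le> k" by auto
      moreover have "r ^ j \<ge> r ^ k" using r1 r0 \<open>j \<le> k\<close> by (simp add: power_decreasing)
      ultimately show False using big_elem_contra[OF r0 M] by blast
    qed
    define N where "N = Max (set_mset M)"
    have M0: "M \<noteq> {#}" using M(2) by auto
    have le: "\<forall>j\<in>#M. j \<le> N" unfolding N_def by auto
    have kN: "k < N" using gt M0 le by (metis multiset_nonemptyE order_less_le_trans)
    have A: "of_int d ^ N * rep r M = (of_int (sum_mset (image_mset (\<lambda>j. n^j * d^(N-j)) M)) :: rat)"
      using rep_scale[OF _ le, of d n] d r by simp
    have B: "of_int d ^ N * rep r M = (of_int (n ^ k * d ^ (N - k)) :: rat)"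
      using rep_scale[of d "{#k#}" N n] d r kN M(1) by simp
    have eq: "n ^ k * d ^ (N - k) = sum_mset (image_mset (\<lambda>j. n^j * d^(N-j)) M)"
      using A B of_int_eq_iff by fastforce
    have "n ^ k * n dvd sum_mset (image_mset (\<lambda>j. n^j * d^(N-j)) M)"
    proof (rule dvd_sum_mset_image)
      fix j assume "j \<in># M"
      hence "j = Suc k + (j - Suc k)" using gt by auto
      hence "n ^ j = (n ^ k * n) * n ^ (j - Suc k)" by (metis power_Suc2 power_add)
      thus "n ^ k * n dvd n^j * d^(N-j)" by simp
    qed
    hence "n ^ k * n dvd n ^ k * d ^ (N - k)" using eq by simp
    hence "n dvd d ^ (N - k)" using n by (subst (asm) dvd_mult_cancel_left) auto
    moreover have "coprime n (d ^ (N - k))" using cop by simp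
    ultimately have "is_unit n" by (meson coprime_common_divisor dvd_refl)
    thus False using n by simp
  qed
  show ?thesis unfolding atoms_def using mem r0 irr by auto
qed

lemma lengths_pos: "x \<noteq> 0 \<Longrightarrow> l \<in> lengths r x \<Longrightarrow> l \<ge> 1"
proof -
  assume x: "x \<noteq> 0" and "l \<in> lengths r x"
  then obtain F where "sum_mset F = x" "l = size F" by (auto simp: lengths_def factorizations_def)
  hence "F \<noteq> {#}" using x by auto
  thus "l \<ge> 1" using \<open>l = size F\<close> by (simp add: Suc_le_eq nonempty_has_size)
qed

lemma lengths_ne: "atomic r \<Longrightarrow> x \<in> Sr r \<Longrightarrow> x \<noteq> 0 \<Longrightarrow> lengths r x \<noteq> {}"
  by (auto simp: atomic_def lengths_def)

lemma Nat_Sr: "x \<in> Sr r \<Longrightarrow> r \<in> \<nat> \<Longrightarrow> x \<in> \<nat>"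
proof (induction x rule: Sr.induct)
  case zero then show ?case by simp
next
  case (step x n)
  then obtain m where "r = of_nat m" by (auto elim: Nats_cases)
  hence "r ^ n \<in> \<nat>" by (simp add: of_nat_power[symmetric] del: of_nat_power)
  then show ?case using step by (simp add: Nats_add)
qed

lemma caseA_atoms:
  assumes "r \<in> \<nat>" "a \<in> atoms r" shows "a = 1"
proof -
  from assms have a: "a \<in> Sr r" "a \<noteq> 0" and irr: "\<forall>b\<in>Sr r. \<forall>c\<in>Sr r. a = b + c \<longrightarrow> b = 0 \<or> c = 0"
    by (auto simp: atoms_def)
  obtain k where k: "a = of_nat k" using Nat_Sr[OF a(1) assms(1)] Nats_cases by blast
  have "k \<noteq> 0" using a k by auto
  moreover have "\<not> k \<ge> 2"
  proof
    assume that: "k \<ge> 2"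
    have "a = of_nat 1 + of_nat (k - 1)" using k that by simp
    moreover have "of_nat (k - 1) \<noteq> (0::rat)" using that by simp
    ultimately show False using irr of_nat_in_Sr[of 1 r] of_nat_in_Sr[of "k-1" r] by fastforce
  qed
  ultimately have "k = 1" by linarith
  thus ?thesis using k by simp
qed

lemma caseA:
  assumes "r \<in> \<nat>" "atomic r" shows "monoid_elasticity r = 1"
proof -
  have el: "elasticity r x = 1" if x: "x \<in> Sr r - {0}" for x
  proof -
    have all: "of_nat l = x" if "l \<in> lengths r x" for l
    proof -
      from that obtain F where F: "set_mset F \<subseteq> atoms r" "sum_mset F = x" "l = size F"
        by (auto simp: lengths_def factorizations_def)
      have "\<forall>a\<in>#F. a = 1" using F(1) caseA_atoms[OF assms(1)] by auto
      thus ?thesis using size_eq_sum F by simp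
    qed
    obtain l0 where l0: "l0 \<in> lengths r x" using lengths_ne[OF assms(2)] x by blast
    have "\<forall>l\<in>lengths r x. l = l0" using all l0 by (metis of_nat_eq_iff)
    hence L: "lengths r x = {l0}" using l0 by blast
    have "l0 \<ge> 1" using lengths_pos l0 x by blast
    thus ?thesis using x by (simp add: elasticity_def L)
  qed
  have ne: "(1::rat) \<in> Sr r - {0}" using of_nat_in_Sr[of 1 r] by simp
  have "monoid_elasticity r = (SUP x\<in>Sr r - {0}. (1::ereal))"
    unfolding monoid_elasticity_def using el by (intro SUP_cong) auto
  also have "\<dots> = 1" using ne by (intro SUP_const) blast
  finally show ?thesis .
qed

lemma SUP_unbounded:
  assumes "\<And>m::nat. \<exists>l\<in>S. l \<ge> m"
  shows "(SUP l\<in>S. ereal (real l)) = \<infinity>"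
proof (rule ereal_top)
  fix B :: real
  obtain l where l: "l \<in> S" "l \<ge> nat \<lceil>B\<rceil>" using assms by blast
  have "B \<le> real l" using l(2) by linarith
  hence "ereal B \<le> ereal (real l)" by simp
  also have "\<dots> \<le> (SUP l\<in>S. ereal (real l))" using l(1) by (rule SUP_upper)
  finally show "ereal B \<le> (SUP l\<in>S. ereal (real l))" .
qed

lemma caseB:
  fixes n d :: int
  assumes r: "r = of_int n / of_int d" and d: "d > 0" and n0: "n > 0" and cop: "coprime n d"
    and r1: "r < 1" and at: "atomic r"
  shows "elasticity r (of_int n) = \<infinity>" "monoid_elasticity r = \<infinity>"
proof -
  have r0: "r > 0" using r d n0 by simp
  have nd: "n < d" using r r1 d by (simp add: divide_less_eq)
  have rd: "r * of_int d = of_int n" using r d by simp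
  have n1: "n > 1"
  proof (rule ccontr)
    assume "\<not> n > 1"
    hence n: "n = 1" using n0 by simp
    have noat: False if a: "a \<in> atoms r" for a
    proof -
      obtain j where j: "a = r ^ j" using atom_pow[OF a r0] by blast
      from a have irr: "\<forall>b\<in>Sr r. \<forall>c\<in>Sr r. a = b + c \<longrightarrow> b = 0 \<or> c = 0"
        by (auto simp: atoms_def)
      have "r ^ j = of_int d * r ^ Suc j" using rd n by (simp add: algebra_simps)
      also have "\<dots> = rep r {#Suc j#} + rep r (replicate_mset (nat (d - 1)) (Suc j))"
        using d by (simp add: rep_replicate algebra_simps of_nat_diff)
      finally have "a = rep r {#Suc j#} + rep r (replicate_mset (nat (d - 1)) (Suc j))" using j by simp
      moreover have "rep r {#Suc j#} \<noteq> 0" using r0 by simp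
      moreover have "rep r (replicate_mset (nat (d - 1)) (Suc j)) \<noteq> 0"
        using r0 nd n by (simp add: rep_replicate)
      ultimately show False using irr rep_in_Sr by blast
    qed
    have "(1::rat) \<in> Sr r" using of_nat_in_Sr[of 1 r] by simp
    then obtain F where "set_mset F \<subseteq> atoms r" "sum_mset F = 1"
      using at by (auto simp: atomic_def factorizations_def)
    moreover have "F = {#}" using calculation(1) noat by (metis multiset_nonemptyE subsetD)
    ultimately show False by simp
  qed
  have atk: "r ^ k \<in> atoms r" for k using pow_atom_lt1[OF r d n1 cop] r1 r0 by simp
  have ex: "\<exists>G. set_mset G \<subseteq> atoms r \<and> sum_mset G + of_int n * r ^ m = of_int n \<and> size G \<ge> m" for m
  proof (induction m)
    case 0 then show ?case by (intro exI[of _ "{#}"]) simp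
  next
    case (Suc m)
    then obtain G where G: "set_mset G \<subseteq> atoms r" "sum_mset G + of_int n * r ^ m = of_int n" "size G \<ge> m"
      by blast
    define G' where "G' = G + replicate_mset (nat (d - n)) (r ^ Suc m)"
    have "set_mset G' \<subseteq> atoms r" using G(1) atk[of "Suc m"] by (auto simp: G'_def simp del: power_Suc)
    moreover have "size G' \<ge> Suc m" using G(3) nd by (simp add: G'_def)
    moreover have e1: "sum_mset G' + of_int n * r ^ Suc m = sum_mset G + of_int d * r ^ Suc m"
      using nd by (simp add: G'_def of_nat_diff algebra_simps)
    moreover have e2: "of_int d * r ^ Suc m = of_int n * r ^ m" using rd by (simp add: algebra_simps)
    moreover have "sum_mset G' + of_int n * r ^ Suc m = of_int n" using e1 e2 G(2) by linarith
    ultimately show ?case by blast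
  qed
  have unb: "\<exists>l\<in>lengths r (of_int n). l \<ge> m" for m
  proof -
    obtain G where G: "set_mset G \<subseteq> atoms r" "sum_mset G + of_int n * r ^ m = of_int n" "size G \<ge> m"
      using ex by blast
    define F where "F = G + replicate_mset (nat n) (r ^ m)"
    have "F \<in> factorizations r (of_int n)" using G atk n0 by (auto simp: F_def factorizations_def)
    moreover have "size F \<ge> m" using G(3) by (simp add: F_def)
    ultimately show ?thesis by (auto simp: lengths_def)
  qed
  have xS: "(of_int n :: rat) \<in> Sr r" using of_nat_in_Sr[of "nat n" r] n0 by simp
  have x0: "(of_int n :: rat) \<noteq> 0" using n0 by simp
  define I where "I = Inf (lengths r (of_int n))"
  have "I \<in> lengths r (of_int n)" unfolding I_def using lengths_ne[OF at xS x0] by (rule Inf_nat_def1)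
  hence I1: "I \<ge> 1" using lengths_pos x0 by blast
  show el: "elasticity r (of_int n) = \<infinity>"
    unfolding elasticity_def using x0 SUP_unbounded[OF unb] I1 by (simp add: I_def[symmetric])
  have "elasticity r (of_int n) \<le> monoid_elasticity r"
    unfolding monoid_elasticity_def using xS x0 by (intro SUP_upper) auto
  thus "monoid_elasticity r = \<infinity>" using el by simp
qed

lemma caseC_fin:
  fixes n d :: int
  assumes r: "r = of_int n / of_int d" and d: "d > 1" and cop: "coprime n d"
    and r1: "r > 1" and at: "atomic r" and xS: "x \<in> Sr r"
  shows "elasticity r x \<noteq> \<infinity>"
proof (cases "x = 0")
  case True then show ?thesis by (simp add: elasticity_def)
next
  case x0: False
  have bnd: "real l \<le> real_of_rat x" if "l \<in> lengths r x" for l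
  proof -
    from that obtain F where F: "set_mset F \<subseteq> atoms r" "sum_mset F = x" "l = size F"
      by (auto simp: lengths_def factorizations_def)
    have "\<forall>a\<in>#F. 1 \<le> a"
    proof
      fix a assume "a \<in># F"
      then obtain j where "a = r ^ j" using F(1) atom_pow r1 by (metis less_trans subsetD zero_less_one)
      thus "1 \<le> a" using r1 by simp
    qed
    hence "of_nat l \<le> x" using size_le_sum[OF \<open>\<forall>a\<in>#F. 1 \<le> a\<close>] F(2,3) by simp
    hence "real_of_rat (of_nat l) \<le> real_of_rat x" using of_rat_less_eq by blast
    thus ?thesis by simp
  qed
  define S where "S = (SUP l\<in>lengths r x. ereal (real l))"
  define I where "I = Inf (lengths r x)"
  have "I \<in> lengths r x" unfolding I_def using lengths_ne[OF at xS x0] by (rule Inf_nat_def1)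
  hence I1: "I \<ge> 1" using lengths_pos x0 by blast
  have "S \<le> ereal (real_of_rat x)" unfolding S_def using bnd by (intro SUP_least) simp
  hence "S \<noteq> \<infinity>" by auto
  moreover have "elasticity r x = S / ereal (real I)" using x0 by (simp add: elasticity_def S_def I_def)
  ultimately show ?thesis using I1 by (cases S) auto
qed

lemma caseC_inf:
  fixes n d :: int
  assumes r: "r = of_int n / of_int d" and d: "d > 1" and cop: "coprime n d"
    and r1: "r > 1" and at: "atomic r"
  shows "monoid_elasticity r = \<infinity>"
proof (rule ereal_top)
  fix B :: real
  have nd: "n > d" using r r1 d by (simp add: less_divide_eq)
  have "1 < real_of_int n / real_of_int d" using nd d by simp
  then obtain k where k: "B < (real_of_int n / real_of_int d) ^ k" using real_arch_pow by blast
  have atk: "r ^ j \<in> atoms r" for j using pow_atom_gt1[OF r d cop] r1 by simp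
  define x where "x = (of_int (n ^ k) :: rat)"
  have n0: "n > 0" using nd d by simp
  have x0: "x \<noteq> 0" using n0 by (simp add: x_def)
  have xS: "x \<in> Sr r" using of_nat_in_Sr[of "nat (n^k)" r] n0 by (simp add: x_def)
  have "replicate_mset (nat (n ^ k)) (r ^ 0) \<in> factorizations r x"
    using atk[of 0] n0 by (auto simp: factorizations_def x_def)
  hence L1: "nat (n ^ k) \<in> lengths r x" unfolding lengths_def by (metis image_eqI size_replicate_mset)
  have "(of_int d) ^ k * r ^ k = (of_int n ^ k :: rat)" using r d by (simp add: power_divide)
  hence "replicate_mset (nat (d ^ k)) (r ^ k) \<in> factorizations r x"
    using atk[of k] d by (auto simp: factorizations_def x_def)
  hence L2: "nat (d ^ k) \<in> lengths r x" unfolding lengths_def by (metis image_eqI size_replicate_mset)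
  define S where "S = (SUP l\<in>lengths r x. ereal (real l))"
  define I where "I = Inf (lengths r x)"
  have "I \<in> lengths r x" unfolding I_def using lengths_ne[OF at xS x0] by (rule Inf_nat_def1)
  hence I1: "I \<ge> 1" using lengths_pos x0 by blast
  have Ile: "I \<le> nat (d ^ k)" unfolding I_def Inf_nat_def using L2 by (rule Least_le)
  have S: "ereal (real (nat (n ^ k))) \<le> S" unfolding S_def using L1 by (rule SUP_upper)
  have "ereal B \<le> ereal ((real_of_int n / real_of_int d) ^ k)" using k by simp
  also have "\<dots> = ereal (real (nat (n ^ k)) / real (nat (d ^ k)))" using n0 d by (simp add: power_divide)
  also have "\<dots> \<le> ereal (real (nat (n ^ k)) / real I)"
  proof -
    have A: "real (nat (d ^ k)) = real_of_int d ^ k" using d by simp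
    have "real I \<le> real (nat (d ^ k))" using Ile by (simp only: of_nat_le_iff)
    hence B: "real I \<le> real_of_int d ^ k" using A by simp
    have C: "real I > 0" using I1 by simp
    have "real (nat (n ^ k)) / real_of_int d ^ k \<le> real (nat (n ^ k)) / real I"
      using B C by (intro divide_left_mono) auto
    thus ?thesis using A by simp
  qed
  also have "\<dots> = ereal (real (nat (n ^ k))) / ereal (real I)" using I1 by simp
  also have "\<dots> \<le> S / ereal (real I)" using S I1 by (intro ereal_divide_right_mono) auto
  also have "\<dots> = elasticity r x" using x0 by (simp add: elasticity_def S_def I_def)
  also have "\<dots> \<le> monoid_elasticity r"
    unfolding monoid_elasticity_def using xS x0 by (intro SUP_upper) auto
  finally show "ereal B \<le> monoid_elasticity r" .
qed

theorem proposition4p3: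
  fixes r :: rat
  assumes "r > 0" and "atomic r"
  shows "(\<exists>x\<in>Sr r. elasticity r x = monoid_elasticity r) \<longleftrightarrow> (r \<in> \<nat> \<or> r < 1)"
proof -
  obtain n d where q: "quotient_of r = (n, d)" by (cases "quotient_of r")
  have r: "r = of_int n / of_int d" using q by (rule quotient_of_div)
  have d: "d > 0" using q by (rule quotient_of_denom_pos)
  have cop: "coprime n d" using q by (rule quotient_of_coprime)
  have n0: "n > 0" using assms(1) r d by (simp add: zero_less_divide_iff)
  show ?thesis
  proof (cases "r \<in> \<nat>")
    case True
    have "elasticity r 0 = monoid_elasticity r" using caseA[OF True assms(2)] by (simp add: elasticity_def)
    thus ?thesis using True Sr.zero by blast
  next
    case notN: False
    show ?thesis
    proof (cases "r < 1")
      case True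
      have "(of_int n :: rat) \<in> Sr r" using of_nat_in_Sr[of "nat n" r] n0 by simp
      moreover have "elasticity r (of_int n) = monoid_elasticity r"
        using caseB[OF r d n0 cop True assms(2)] by simp
      ultimately show ?thesis using True by blast
    next
      case False
      have "r \<noteq> 1" using notN by auto
      hence r1: "r > 1" using False by simp
      have "d \<noteq> 1"
      proof
        assume "d = 1"
        hence "r = of_nat (nat n)" using r n0 by simp
        thus False using notN by simp
      qed
      hence d1: "d > 1" using d by simp
      have "\<forall>x\<in>Sr r. elasticity r x \<noteq> monoid_elasticity r"
        using caseC_fin[OF r d1 cop r1 assms(2)] caseC_inf[OF r d1 cop r1 assms(2)] by simp
      thus ?thesis using notN False by blast
    qed
  qed
qed

end
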